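(* Let $p$ be a prime, $k$ even, and let $G=HN$ be the affine permutation group of degree $p^k$ with $N=\mathbb F_{p^k}$ acting by translations and $H=\mathrm{GL}_1(p^k)\langle\phi\rangle\le\Gamma\mathrm L_1(p^k)$, where $\phi$ is the field automorphism of $\mathbb F_{p^k}$ of order $2$. Then $G$ is a non-Frobenius $2$-transitive group and $\kappa(G)=2$.
   Context: A derangement is an element fixing no point; $\kappa(G)$ is the number of conjugacy classes of derangements. $\mathrm{GL}_1(p^k)=\mathbb F_{p^k}^\times$ acting by multiplication. *)

theory Defs
  imports Main "HOL-Computational_Algebra.Primes"
begin

text \<open>Permutation groups are represented as sets of functions on a finite type
 (acting on the whole type). All groups below consist of bijections.\<close>

definition derangement :: "('a \<Rightarrow> 'a) \<Rightarrow> bool" where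
  "derangement g \<longleftrightarrow> (\<forall>x. g x \<noteq> x)"

definition conj_class :: "('a \<Rightarrow> 'a) set \<Rightarrow> ('a \<Rightarrow> 'a) \<Rightarrow> ('a \<Rightarrow> 'a) set" where
  "conj_class G g = {h \<circ> g \<circ> inv h | h. h \<in> G}"

definition kappa :: "('a \<Rightarrow> 'a) set \<Rightarrow> nat" where
  "kappa G = card {conj_class G g | g. g \<in> G \<and> derangement g}"

definition transitive_perm :: "('a \<Rightarrow> 'a) set \<Rightarrow> bool" where
  "transitive_perm G \<longleftrightarrow> (\<forall>x y. \<exists>g\<in>G. g x = y)"

definition two_transitive :: "('a \<Rightarrow> 'a) set \<Rightarrow> bool" where
  "two_transitive G \<longleftrightarrow>
     (\<forall>x y u v. x \<noteq> y \<and> u \<noteq> v \<longrightarrow> (\<exists>g\<in>G. g x = u \<and> g y = v))"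

definition frobenius :: "('a \<Rightarrow> 'a) set \<Rightarrow> bool" where
  "frobenius G \<longleftrightarrow> transitive_perm G
     \<and> (\<exists>g\<in>G. g \<noteq> id \<and> (\<exists>x. g x = x))
     \<and> (\<forall>g\<in>G. g \<noteq> id \<longrightarrow> card {x. g x = x} \<le> 1)"

text \<open>The affine group  G = H N  with N the translations of the field and
 H = GL_1 \<langle>phi\<rangle>: maps x \<mapsto> a * phi^e(x) + b, a \<noteq> 0, e \<in> {0,1}.\<close>
definition affine_semilinear_group :: "('a::field \<Rightarrow> 'a) \<Rightarrow> ('a \<Rightarrow> 'a) set" where
  "affine_semilinear_group phi =
     {(\<lambda>x. a * ((phi ^^ e) x) + b) | a e b. a \<noteq> 0 \<and> e < (2::nat)}"

end

theory Submission
  imports Defs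
begin

definition lin :: "'a::field \<Rightarrow> 'a \<Rightarrow> 'a \<Rightarrow> 'a" where
  "lin a b = (\<lambda>x. a * x + b)"

definition semi :: "('a::field \<Rightarrow> 'a) \<Rightarrow> 'a \<Rightarrow> 'a \<Rightarrow> 'a \<Rightarrow> 'a" where
  "semi phi a b = (\<lambda>x. a * phi x + b)"

lemma der_conj:
  assumes "bij k" "derangement g"
  shows "derangement (k \<circ> g \<circ> inv k)"
  unfolding derangement_def
proof
  fix y
  show "(k \<circ> g \<circ> inv k) y \<noteq> y"
  proof
    assume h: "(k \<circ> g \<circ> inv k) y = y"
    have "k (inv k y) = y" using assms(1) by (simp add: bij_is_surj surj_f_inv_f)
    with h have "k (g (inv k y)) = k (inv k y)" by simp
    hence "g (inv k y) = inv k y" using assms(1) by (simp add: bij_is_inj inj_eq)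
    thus False using assms(2) by (simp add: derangement_def)
  qed
qed

lemma conj_class_eq:
  assumes cl: "\<And>g h. g \<in> G \<Longrightarrow> h \<in> G \<Longrightarrow> g \<circ> h \<in> G"
    and ci: "\<And>g. g \<in> G \<Longrightarrow> inv g \<in> G"
    and cb: "\<And>g. g \<in> G \<Longrightarrow> bij g"
    and k: "k \<in> G"
  shows "conj_class G (k \<circ> g \<circ> inv k) = conj_class G g"
proof
  show "conj_class G (k \<circ> g \<circ> inv k) \<subseteq> conj_class G g"
  proof
    fix x assume "x \<in> conj_class G (k \<circ> g \<circ> inv k)"
    then obtain h where h: "h \<in> G" "x = h \<circ> (k \<circ> g \<circ> inv k) \<circ> inv h"
      unfolding conj_class_def by blast
    have "inv (h \<circ> k) = inv k \<circ> inv h" using cb h(1) k by (simp add: o_inv_distrib)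
    hence "x = (h \<circ> k) \<circ> g \<circ> inv (h \<circ> k)" using h(2) by (simp add: comp_assoc)
    thus "x \<in> conj_class G g" unfolding conj_class_def using cl[OF h(1) k] by blast
  qed
next
  show "conj_class G g \<subseteq> conj_class G (k \<circ> g \<circ> inv k)"
  proof
    fix x assume "x \<in> conj_class G g"
    then obtain h where h: "h \<in> G" "x = h \<circ> g \<circ> inv h"
      unfolding conj_class_def by blast
    have bk: "bij k" using cb k by simp
    have "inv (h \<circ> inv k) = inv (inv k) \<circ> inv h" using cb h(1) ci k by (simp add: o_inv_distrib)
    also have "inv (inv k) = k" using bk by (simp add: inv_inv_eq)
    finally have e: "inv (h \<circ> inv k) = k \<circ> inv h" .
    have "inv k \<circ> k = id" using bk by (simp add: bij_is_inj)
    hence "x = (h \<circ> inv k) \<circ> (k \<circ> g \<circ> inv k) \<circ> inv (h \<circ> inv k)"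
      using h(2) e bk by (simp add: fun_eq_iff bij_is_inj)
    thus "x \<in> conj_class G (k \<circ> g \<circ> inv k)"
      unfolding conj_class_def using cl[OF h(1) ci[OF k]] by blast
  qed
qed

lemma conj_self: "id \<in> G \<Longrightarrow> g \<in> conj_class G g"
  unfolding conj_class_def by (auto intro!: exI[of _ id])

locale S =
  fixes phi :: "'a::{field,finite} \<Rightarrow> 'a"
  assumes padd[simp]: "\<And>x y. phi (x+y) = phi x + phi y"
  and pmult[simp]: "\<And>x y. phi (x*y) = phi x * phi y"
  and pinv[simp]: "\<And>x. phi (phi x) = x"
  and pnid: "phi \<noteq> id"
begin

lemma p0[simp]: "phi 0 = 0" using padd[of 0 0] by (metis add.right_neutral add_left_cancel add_0)

lemma pminus[simp]: "phi (-x) = - phi x"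
proof -
  have "phi x + phi (-x) = 0" using padd[of x "-x"] by simp
  thus ?thesis by (simp add: add_eq_0_iff2)
qed

lemma pdiff[simp]: "phi (x - y) = phi x - phi y"
  using padd[of x "-y"] by simp

lemma pnz[simp]: "phi a = 0 \<longleftrightarrow> a = 0" by (metis p0 pinv)

lemma p1[simp]: "phi 1 = 1"
proof -
  have "phi 1 = phi 1 * phi 1" using pmult[of 1 1] by simp
  moreover have "phi 1 \<noteq> 0" by simp
  ultimately show ?thesis by (metis mult_cancel_left1)
qed

lemma pinverse[simp]: "phi (inverse a) = inverse (phi a)"
proof (cases "a = 0")
  case False
  have "phi a * phi (inverse a) = 1" using pmult[of a "inverse a"] False by simp
  thus ?thesis by (metis inverse_unique)
qed simp

lemma pdivide[simp]: "phi (a / b) = phi a / phi b"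
  by (simp add: divide_inverse)

abbreviation "G \<equiv> affine_semilinear_group phi"

lemma G_char: "g \<in> G \<longleftrightarrow> (\<exists>a b. a \<noteq> 0 \<and> (g = lin a b \<or> g = semi phi a b))"
proof
  assume "g \<in> G"
  then obtain a e b where "g = (\<lambda>x. a * ((phi ^^ e) x) + b)" "a \<noteq> 0" "e < 2"
    unfolding affine_semilinear_group_def by blast
  moreover have "e = 0 \<or> e = 1" using \<open>e < 2\<close> by auto
  ultimately have "g = lin a b \<or> g = semi phi a b" by (auto simp: lin_def semi_def)
  thus "\<exists>a b. a \<noteq> 0 \<and> (g = lin a b \<or> g = semi phi a b)" using \<open>a \<noteq> 0\<close> by blast
next
  assume "\<exists>a b. a \<noteq> 0 \<and> (g = lin a b \<or> g = semi phi a b)"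
  then obtain a b where ab: "a \<noteq> 0" "g = lin a b \<or> g = semi phi a b" by blast
  show "g \<in> G"
  proof (cases "g = lin a b")
    case True
    hence "g = (\<lambda>x. a * ((phi ^^ 0) x) + b)" by (simp add: lin_def)
    thus ?thesis using ab unfolding affine_semilinear_group_def
      by (intro CollectI exI[where x=a] exI[where x="0::nat"] exI[where x=b]) simp
  next
    case False
    hence "g = (\<lambda>x. a * ((phi ^^ 1) x) + b)" using ab by (simp add: semi_def)
    thus ?thesis using ab unfolding affine_semilinear_group_def
      by (intro CollectI exI[where x=a] exI[where x="1::nat"] exI[where x=b]) simp
  qed
qed

lemma ll: "lin a b \<circ> lin c d = lin (a*c) (a*d+b)"
  by (simp add: lin_def fun_eq_iff algebra_simps)
lemma ls: "lin a b \<circ> semi phi c d = semi phi (a*c) (a*d+b)"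
  by (simp add: lin_def semi_def fun_eq_iff algebra_simps)
lemma sl: "semi phi a b \<circ> lin c d = semi phi (a*phi c) (a*phi d+b)"
  by (simp add: lin_def semi_def fun_eq_iff algebra_simps)
lemma ss: "semi phi a b \<circ> semi phi c d = lin (a*phi c) (a*phi d+b)"
  by (simp add: lin_def semi_def fun_eq_iff algebra_simps)

lemma lin_id: "lin 1 0 = id" by (simp add: lin_def fun_eq_iff)

lemma inv_lin: "a \<noteq> 0 \<Longrightarrow> inv (lin a b) = lin (inverse a) (-b/a)"
  by (rule inv_unique_comp) (simp_all add: ll lin_def fun_eq_iff field_simps)

lemma bij_lin: "a \<noteq> 0 \<Longrightarrow> bij (lin a b)"
  by (rule o_bij[of "lin (inverse a) (-b/a)"]) (simp_all add: ll lin_def fun_eq_iff field_simps)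

lemma inv_semi: "a \<noteq> 0 \<Longrightarrow> inv (semi phi a b) = semi phi (inverse (phi a)) (-phi (b/a))"
  by (rule inv_unique_comp) (simp_all add: ss lin_def fun_eq_iff field_simps)

lemma bij_semi: "a \<noteq> 0 \<Longrightarrow> bij (semi phi a b)"
  by (rule o_bij[of "semi phi (inverse (phi a)) (-phi (b/a))"])
     (simp_all add: ss lin_def fun_eq_iff field_simps)

lemma lin_ne_semi: assumes "a \<noteq> 0" shows "lin a b \<noteq> semi phi c d"
proof
  assume e: "lin a b = semi phi c d"
  have b: "b = d" using fun_cong[OF e, of 0] by (simp add: lin_def semi_def)
  have "a + b = c + d" using fun_cong[OF e, of 1] by (simp add: lin_def semi_def)
  with b have c: "a = c" by simp
  have "\<forall>x. phi x = x"
  proof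
    fix x have "a * x + b = a * phi x + b" using fun_cong[OF e, of x] b c by (simp add: lin_def semi_def)
    thus "phi x = x" using assms by simp
  qed
  thus False using pnid by (simp add: fun_eq_iff)
qed

lemma G_bij: assumes "g \<in> G" shows "bij g"
proof -
  obtain a b where a: "a \<noteq> 0" "g = lin a b \<or> g = semi phi a b" using G_char[THEN iffD1, OF assms] by blast
  show ?thesis using a by (elim disjE) (simp_all add: bij_lin bij_semi)
qed

lemma lin_G: "a \<noteq> 0 \<Longrightarrow> lin a b \<in> G" by (rule G_char[THEN iffD2]) blast
lemma semi_G: "a \<noteq> 0 \<Longrightarrow> semi phi a b \<in> G" by (rule G_char[THEN iffD2]) blast

lemma G_comp: assumes "g \<in> G" "h \<in> G" shows "g \<circ> h \<in> G"
proof -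
  obtain a b where a: "a \<noteq> 0" "g = lin a b \<or> g = semi phi a b" using G_char[THEN iffD1, OF assms(1)] by blast
  obtain c d where c: "c \<noteq> 0" "h = lin c d \<or> h = semi phi c d" using G_char[THEN iffD1, OF assms(2)] by blast
  show ?thesis using a c by (elim disjE) (simp_all add: ll ls sl ss lin_G semi_G)
qed

lemma G_inv: assumes "g \<in> G" shows "inv g \<in> G"
proof -
  obtain a b where a: "a \<noteq> 0" "g = lin a b \<or> g = semi phi a b" using G_char[THEN iffD1, OF assms(1)] by blast
  show ?thesis using a by (elim disjE) (simp_all add: inv_lin inv_semi lin_G semi_G)
qed

lemma G_id: "id \<in> G"
proof -
  have "lin (1::'a) 0 \<in> G" by (rule lin_G) simp
  thus ?thesis by (simp add: lin_id)
qed

lemma cc: "k \<in> G \<Longrightarrow> conj_class G (k \<circ> g \<circ> inv k) = conj_class G g"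
  by (rule conj_class_eq) (auto simp: G_comp G_inv G_bij)

lemma der_lin: "derangement (lin a b) \<longleftrightarrow> a = 1 \<and> b \<noteq> 0"
proof
  assume d: "derangement (lin a b)"
  show "a = 1 \<and> b \<noteq> 0"
  proof (rule ccontr)
    assume n: "\<not> (a = 1 \<and> b \<noteq> 0)"
    show False
    proof (cases "a = 1")
      case True
      hence "b = 0" using n by simp
      thus False using d True by (simp add: derangement_def lin_def)
    next
      case False
      hence "1 - a \<noteq> 0" by simp
      hence "a * (b / (1 - a)) + b = b / (1 - a)" by (simp add: field_simps)
      hence "lin a b (b / (1 - a)) = b / (1 - a)" by (simp add: lin_def)
      thus False using d unfolding derangement_def by blast
    qed
  qed
qed (simp add: derangement_def lin_def)

lemma der_semi: "derangement (semi phi a b) \<longleftrightarrow> b \<notin> range (\<lambda>x. x - a * phi x)"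
  by (auto simp: derangement_def semi_def algebra_simps)

definition L where "L = (\<lambda>x. x - phi x)"
definition F0 where "F0 = {c. phi c = c}"

lemma L_add: "L (x + y) = L x + L y" by (simp add: L_def)
lemma L_diff: "L (x - y) = L x - L y" by (simp add: L_def)
lemma L_scal: "c \<in> F0 \<Longrightarrow> L (c * x) = c * L x" by (simp add: L_def F0_def algebra_simps)

lemma exists_beta: "\<exists>b. b \<notin> range L"
proof (rule ccontr)
  assume "\<not> (\<exists>b. b \<notin> range L)"
  hence "surj L" by auto
  hence "inj L" by (simp add: finite_UNIV_surj_inj)
  moreover have "L 0 = L 1" by (simp add: L_def)
  ultimately show False by (metis inj_eq zero_neq_one)
qed

lemma fiber: "L -` {L x} = (\<lambda>k. x + k) ` F0"
proof (rule set_eqI)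
  fix z
  have "z \<in> L -` {L x} \<longleftrightarrow> phi (z - x) = z - x" by (auto simp: L_def algebra_simps)
  also have "\<dots> \<longleftrightarrow> z \<in> (\<lambda>k. x + k) ` F0"
    by (auto simp: F0_def image_iff intro!: exI[of _ "z - x"])
  finally show "z \<in> L -` {L x} \<longleftrightarrow> z \<in> (\<lambda>k. x + k) ` F0" .
qed

lemma card_fiber: "card (L -` {y}) = card F0" if yL: "y \<in> range L" for y
proof -
  obtain x where "y = L x" using yL by blast
  hence "L -` {y} = (\<lambda>k. x + k) ` F0" using fiber by simp
  moreover have "inj_on (\<lambda>k. x + k) F0" by (simp add: inj_on_def)
  ultimately show ?thesis by (simp add: card_image)
qed

lemma count: "card (range L) * card F0 = card (UNIV::'a set)"
proof -
  have U: "UNIV = (\<Union>y\<in>range L. L -` {y})" by auto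
  have "card (\<Union>y\<in>range L. L -` {y}) = (\<Sum>y\<in>range L. card (L -` {y}))"
    by (rule card_UN_disjoint) auto
  also have "\<dots> = (\<Sum>y\<in>range L. card F0)" using card_fiber by simp
  finally show ?thesis using U by simp
qed

lemma cover:
  assumes b1: "b1 \<notin> range L"
  shows "(\<Union>c\<in>F0. (\<lambda>i. c * b1 + i) ` range L) = UNIV"
proof (rule card_subset_eq)
  have "card (\<Union>c\<in>F0. (\<lambda>i. c * b1 + i) ` range L) = (\<Sum>c\<in>F0. card ((\<lambda>i. c * b1 + i) ` range L))"
  proof (rule card_UN_disjoint)
    show "\<forall>c\<in>F0. \<forall>c'\<in>F0. c \<noteq> c' \<longrightarrow> (\<lambda>i. c * b1 + i) ` range L \<inter> (\<lambda>i. c' * b1 + i) ` range L = {}"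
    proof (intro ballI impI)
      fix c c' assume c: "c \<in> F0" "c' \<in> F0" "c \<noteq> c'"
      show "(\<lambda>i. c * b1 + i) ` range L \<inter> (\<lambda>i. c' * b1 + i) ` range L = {}"
      proof (rule ccontr)
        assume "(\<lambda>i. c * b1 + i) ` range L \<inter> (\<lambda>i. c' * b1 + i) ` range L \<noteq> {}"
        then obtain d d' where e: "c * b1 + L d = c' * b1 + L d'" by auto
        have "(c - c') * b1 = L (d' - d)" using e by (simp add: L_diff algebra_simps)
        define f where "f = inverse (c - c')"
        have fF: "f \<in> F0" using c by (simp add: F0_def f_def)
        have "b1 = f * L (d' - d)" using \<open>(c - c') * b1 = _\<close>[symmetric] c(3)
          by (simp add: f_def field_simps)
        also have "\<dots> = L (f * (d' - d))" using L_scal[OF fF] by simp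
        finally show False using b1 by auto
      qed
    qed
  qed auto
  also have "\<dots> = (\<Sum>c\<in>F0. card (range L))"
    by (rule sum.cong) (auto simp: card_image inj_on_def)
  also have "\<dots> = card (UNIV::'a set)" using count by (simp add: mult.commute)
  finally show "card (\<Union>c\<in>F0. (\<lambda>i. c * b1 + i) ` range L) = card (UNIV::'a set)" .
qed auto

lemma semi1_conj:
  assumes "b1 \<notin> range L" "b2 \<notin> range L"
  shows "conj_class G (semi phi 1 b2) = conj_class G (semi phi 1 b1)"
proof -
  have "b2 \<in> (\<Union>c\<in>F0. (\<lambda>i. c * b1 + i) ` range L)" using cover[OF assms(1)] by simp
  then obtain c d where c: "c \<in> F0" and e: "b2 = c * b1 + L d" by auto
  have cnz: "c \<noteq> 0" using e assms(2) c by auto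
  have pc: "phi c = c" using c by (simp add: F0_def)
  have "lin c d \<circ> semi phi 1 b1 \<circ> inv (lin c d) = semi phi 1 (c * b1 + d - phi d)"
    unfolding inv_lin[OF cnz] using cnz pc by (simp add: lin_def semi_def fun_eq_iff field_simps)
  also have "c * b1 + d - phi d = b2" using e by (simp add: L_def)
  finally have "lin c d \<circ> semi phi 1 b1 \<circ> inv (lin c d) = semi phi 1 b2" .
  moreover have "lin c d \<in> G" using cnz by (rule lin_G)
  ultimately show ?thesis using cc by metis
qed

lemma semi_reduce:
  assumes a: "a \<noteq> 0" and d: "derangement (semi phi a b)"
  shows "\<exists>b'. b' \<notin> range L \<and> conj_class G (semi phi 1 b') = conj_class G (semi phi a b)"
proof -
  let ?La = "\<lambda>x. x - a * phi x"
  have "\<not> surj ?La" using d der_semi by auto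
  hence "\<not> inj ?La" using finite_UNIV_inj_surj[OF finite_UNIV, of ?La] by blast
  then obtain x y where xy: "x \<noteq> y" "?La x = ?La y" unfolding inj_def by blast
  define x0 where "x0 = x - y"
  have x0nz: "x0 \<noteq> 0" using xy by (simp add: x0_def)
  have x0e: "a * phi x0 = x0" using xy by (simp add: x0_def algebra_simps)
  define k where "k = lin (inverse x0) 0"
  have kG: "k \<in> G" using x0nz k_def by (simp add: lin_G)
  have "k \<circ> semi phi a b \<circ> inv k = semi phi 1 (b / x0)"
  proof -
    have "k \<circ> semi phi a b \<circ> inv k = semi phi (inverse x0 * a * phi x0) (b / x0)"
      using x0nz by (simp add: k_def inv_lin ls sl field_simps)
    also have "inverse x0 * a * phi x0 = 1" using x0e x0nz by (simp add: mult.assoc)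
    finally show ?thesis .
  qed
  moreover have "derangement (k \<circ> semi phi a b \<circ> inv k)"
    using der_conj[OF G_bij[OF kG] d] .
  ultimately have "b / x0 \<notin> range L" using der_semi by (simp add: L_def)
  moreover have "conj_class G (semi phi 1 (b/x0)) = conj_class G (semi phi a b)"
    using cc[OF kG] \<open>k \<circ> semi phi a b \<circ> inv k = _\<close> by metis
  ultimately show ?thesis by blast
qed

lemma conj_semi_is_semi:
  assumes "h \<in> G" "c \<noteq> 0"
  shows "\<exists>a' b'. h \<circ> semi phi c d \<circ> inv h = semi phi a' b'"
proof -
  obtain a b where ab: "a \<noteq> 0" "h = lin a b \<or> h = semi phi a b" using G_char[THEN iffD1, OF assms(1)] by blast
  thus ?thesis
    apply (elim disjE)
     apply (simp_all add: inv_lin inv_semi ls sl ss)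
     apply blast+
    done
qed

lemma kappa2: "kappa G = 2"
proof -
  obtain \<beta> where beta: "\<beta> \<notin> range L" using exists_beta by blast
  let ?C1 = "conj_class G (lin 1 1)"
  let ?C2 = "conj_class G (semi phi 1 \<beta>)"
  have in1: "lin 1 1 \<in> G" by (simp add: lin_G)
  have in2: "semi phi 1 \<beta> \<in> G" by (simp add: semi_G)
  have d1: "derangement (lin 1 1)" by (simp add: der_lin)
  have d2: "derangement (semi phi 1 \<beta>)" using beta by (simp add: der_semi L_def)
  have D: "{conj_class G g | g. g \<in> G \<and> derangement g} = {?C1, ?C2}"
  proof
    show "{conj_class G g | g. g \<in> G \<and> derangement g} \<subseteq> {?C1, ?C2}"
    proof
      fix C assume "C \<in> {conj_class G g | g. g \<in> G \<and> derangement g}"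
      then obtain g where g: "C = conj_class G g" "g \<in> G" "derangement g" by blast
      then obtain a b where ab: "a \<noteq> 0" "g = lin a b \<or> g = semi phi a b" using G_char[THEN iffD1, OF g(2)] by blast
      show "C \<in> {?C1, ?C2}"
      proof (cases "g = lin a b")
        case True
        hence a1: "a = 1" "b \<noteq> 0" using g(3) der_lin by auto
        have "lin b 0 \<circ> lin 1 1 \<circ> inv (lin b 0) = lin 1 b"
          using a1 by (simp add: inv_lin ll)
        moreover have "lin b 0 \<in> G" using a1 by (simp add: lin_G)
        ultimately have "conj_class G (lin 1 b) = ?C1" using cc by metis
        thus ?thesis using g(1) True a1 by simp
      next
        case False
        hence gs: "g = semi phi a b" using ab by simp
        obtain b' where b': "b' \<notin> range L" "conj_class G (semi phi 1 b') = conj_class G g"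
          using semi_reduce[OF ab(1)] g(3) gs by blast
        have "conj_class G (semi phi 1 b') = ?C2" using semi1_conj[OF beta b'(1)] .
        thus ?thesis using g(1) b'(2) by simp
      qed
    qed
  next
    show "{?C1, ?C2} \<subseteq> {conj_class G g | g. g \<in> G \<and> derangement g}"
      using in1 in2 d1 d2 by blast
  qed
  have ne: "?C1 \<noteq> ?C2"
  proof
    assume "?C1 = ?C2"
    hence "lin 1 1 \<in> ?C2" using conj_self[OF G_id] by metis
    then obtain h where h: "h \<in> G" "lin 1 1 = h \<circ> semi phi 1 \<beta> \<circ> inv h"
      unfolding conj_class_def by blast
    obtain a' b' where "h \<circ> semi phi 1 \<beta> \<circ> inv h = semi phi a' b'"
      using conj_semi_is_semi[OF h(1)] by fastforce
    thus False using h(2) lin_ne_semi[of 1 1] by simp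
  qed
  show ?thesis unfolding kappa_def D using ne by simp
qed

lemma two_trans: "two_transitive G"
  unfolding two_transitive_def
proof (intro allI impI)
  fix x y u v :: 'a assume "x \<noteq> y \<and> u \<noteq> v"
  hence n: "x - y \<noteq> 0" "u - v \<noteq> 0" by auto
  define a where "a = (u - v) / (x - y)"
  have anz: "a \<noteq> 0" using n by (simp add: a_def)
  have "lin a (u - a * x) \<in> G" using anz by (rule lin_G)
  moreover have "lin a (u - a * x) x = u" by (simp add: lin_def)
  moreover have "lin a (u - a * x) y = v"
  proof -
    have "a * (x - y) = u - v" using n by (simp add: a_def)
    thus ?thesis by (simp add: lin_def algebra_simps)
  qed
  ultimately show "\<exists>g\<in>G. g x = u \<and> g y = v" by blast
qed

lemma not_frob: "\<not> frobenius G"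
proof
  assume f: "frobenius G"
  have "semi phi 1 0 \<in> G" by (simp add: semi_G)
  moreover have "semi phi 1 0 = phi" by (simp add: semi_def fun_eq_iff)
  ultimately have pG: "phi \<in> G" by simp
  have "{0, 1} \<subseteq> {x. phi x = x}" by auto
  hence "card {0, 1::'a} \<le> card {x. phi x = x}" by (intro card_mono) auto
  hence "card {x. phi x = x} \<ge> 2" by simp
  thus False using f pG pnid unfolding frobenius_def by fastforce
qed

end

theorem proposition4p10:
  fixes phi :: "'a::{field,finite} \<Rightarrow> 'a" and p k :: nat
  assumes "prime p" and "even k" and "card (UNIV :: 'a set) = p ^ k"
    and "\<And>x y. phi (x + y) = phi x + phi y"
    and "\<And>x y. phi (x * y) = phi x * phi y"
    and "phi \<circ> phi = id" and "phi \<noteq> id"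
  shows "two_transitive (affine_semilinear_group phi)
     \<and> \<not> frobenius (affine_semilinear_group phi)
     \<and> kappa (affine_semilinear_group phi) = 2"
proof -
  interpret S phi
    using assms(4-7) by unfold_locales (auto simp: fun_eq_iff)
  show ?thesis using two_trans not_frob kappa2 by blast
qed

end
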